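(* Richard Thompson's group $F$ is not presentable by a product.
   Context: Thompson's group $F$ is the group of piecewise linear orientation-preserving homeomorphisms of $[0,1]$ with finitely many breakpoints, all at dyadic rationals, and all slopes integral powers of $2$. An infinite group $\Gamma$ is not presentable by a product if for every homomorphism $\varphi\colon \Gamma_1\times\Gamma_2\to\Gamma$ whose image has finite index in $\Gamma$, at least one of $\varphi(\Gamma_1)$, $\varphi(\Gamma_2)$ is finite. *)

theory Defs
  imports "HOL-Analysis.Analysis" "HOL-Algebra.Algebra"
begin

definition dyadic :: "real \<Rightarrow> bool" where
  "dyadic x \<longleftrightarrow> (\<exists>(m::int) (n::nat). x = of_int m / 2 ^ n)"

text \<open>To obtain a canonical
  representative as a HOL function real => real, f is required to be the
  identity outside [0,1].\<close>
definition thompsonF_carrier :: "(real \<Rightarrow> real) set" where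
  "thompsonF_carrier = {f.
     (\<exists>g. homeomorphism {0..1} {0..1} f g) \<and>
     strict_mono_on {0..1} f \<and>
     (\<exists>xs::real list. length xs \<ge> 2 \<and> sorted_wrt (<) xs \<and>
        hd xs = 0 \<and> last xs = 1 \<and> (\<forall>x\<in>set xs. dyadic x) \<and>
        (\<forall>i. Suc i < length xs \<longrightarrow>
           (\<exists>(k::int) (b::real). \<forall>x\<in>{xs!i..xs!Suc i}. f x = 2 powr (real_of_int k) * x + b))) \<and>
     (\<forall>x. x \<notin> {0..1} \<longrightarrow> f x = x)}"

definition thompsonF :: "(real \<Rightarrow> real) monoid" where
  "thompsonF = \<lparr>carrier = thompsonF_carrier, mult = (\<lambda>f g. f \<circ> g), one = id\<rparr>"

end

theory Submission
  imports Defs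
begin


lemma dyadic_int: "dyadic (of_int m)"
  unfolding dyadic_def by (rule exI[of _ m], rule exI[of _ 0]) simp

lemma dyadic_add: assumes "dyadic x" "dyadic y" shows "dyadic (x+y)"
proof -
  obtain m n m' n' where x: "x = of_int m / 2^n" and y: "y = of_int m' / 2^n'"
    using assms by (auto simp: dyadic_def)
  have "x + y = of_int (m * 2^n' + m' * 2^n) / 2^(n+n')"
    by (simp add: x y field_simps power_add)
  thus ?thesis unfolding dyadic_def by blast
qed

lemma dyadic_uminus: assumes "dyadic x" shows "dyadic (-x)"
proof -
  obtain m n where x: "x = of_int m / 2^n" using assms by (auto simp: dyadic_def)
  have "-x = of_int (-m) / 2^n" by (simp add: x)
  thus ?thesis unfolding dyadic_def by blast
qed

lemma dyadic_diff: "dyadic x \<Longrightarrow> dyadic y \<Longrightarrow> dyadic (x - y)"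
  using dyadic_add[of x "-y"] dyadic_uminus[of y] by simp

lemma powr2_int: "(2::real) powr (real_of_int k) = (if k \<ge> 0 then 2^nat k else 1 / 2^nat (-k))"
proof (cases "k \<ge> 0")
  case True
  then have "2 powr real_of_int k = 2 powr real (nat k)" by simp
  also have "\<dots> = 2 ^ nat k" by (rule powr_realpow) simp
  finally show ?thesis using True by simp
next
  case False
  then have "2 powr real_of_int k = 2 powr (- real (nat (-k)))" by simp
  also have "\<dots> = inverse (2 powr real (nat (-k)))" by (rule powr_minus)
  also have "2 powr real (nat (-k)) = 2 ^ nat (-k)" by (rule powr_realpow) simp
  finally show ?thesis using False by (simp add: divide_inverse)
qed

lemma dyadic_scale: assumes "dyadic x" shows "dyadic (2 powr (real_of_int k) * x)"
proof -
  obtain m n where x: "x = of_int m / 2^n" using assms by (auto simp: dyadic_def)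
  show ?thesis
  proof (cases "k \<ge> 0")
    case True
    have "2 powr (real_of_int k) * x = of_int (m * 2^nat k) / 2^n"
      using True by (simp add: powr2_int x)
    thus ?thesis unfolding dyadic_def by blast
  next
    case False
    have "2 powr (real_of_int k) * x = of_int m / 2^(n + nat (-k))"
      using False by (simp add: powr2_int x power_add)
    thus ?thesis unfolding dyadic_def by blast
  qed
qed

lemma dyadic_pow: "dyadic (1 / 2^n)"
  unfolding dyadic_def by (rule exI[of _ 1], rule exI[of _ n]) simp

definition pw :: "real set \<Rightarrow> (real \<Rightarrow> real) \<Rightarrow> bool" where
 "pw D f \<longleftrightarrow> finite D \<and> D \<subseteq> {0..1} \<and> 0 \<in> D \<and> 1 \<in> D \<and> (\<forall>x\<in>D. dyadic x) \<and>
   (\<forall>u\<in>D. \<forall>v\<in>D. u < v \<longrightarrow> {u<..<v} \<inter> D = {} \<longrightarrow>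
       (\<exists>k::int. \<exists>b. \<forall>x\<in>{u..v}. f x = 2 powr (real_of_int k) * x + b))"

lemma pw_piece:
  assumes "pw D f" "0 \<le> u" "u < v" "v \<le> 1" "{u<..<v} \<inter> D = {}"
  shows "\<exists>k::int. \<exists>b. \<forall>x\<in>{u..v}. f x = 2 powr (real_of_int k) * x + b"
proof -
  let ?L = "{d\<in>D. d \<le> u}" and ?R = "{d\<in>D. v \<le> d}"
  have fin: "finite D" and z: "0\<in>D" and o: "1\<in>D" using assms(1) by (auto simp: pw_def)
  have L: "?L \<noteq> {}" "finite ?L" using z assms fin by auto
  have R: "?R \<noteq> {}" "finite ?R" using o assms fin by auto
  define a where "a = Max ?L"
  define c where "c = Min ?R"
  have a: "a \<in> D" "a \<le> u" using Max_in[OF L(2) L(1)] unfolding a_def by auto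
  have c: "c \<in> D" "v \<le> c" using Min_in[OF R(2) R(1)] unfolding c_def by auto
  have "{a<..<c} \<inter> D = {}"
  proof (rule ccontr)
    assume "{a<..<c} \<inter> D \<noteq> {}"
    then obtain e where e: "a < e" "e < c" "e \<in> D" by auto
    show False
    proof (cases "e \<le> u")
      case True
      then have "e \<le> a" unfolding a_def using L e by (auto intro: Max_ge)
      then show False using e by simp
    next
      case False
      show False
      proof (cases "v \<le> e")
        case True
        then have "c \<le> e" unfolding c_def using R e by (auto intro: Min_le)
        then show False using e by simp
      next
        case False
        then have "e \<in> {u<..<v} \<inter> D" using \<open>\<not> e \<le> u\<close> e by auto
        then show False using assms(5) by blast
      qed
    qed
  qed
  moreover have "a < c" using a c assms by linarith
  ultimately obtain k b where kb: "\<forall>x\<in>{a..c}. f x = 2 powr (real_of_int k) * x + b"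
    using assms(1) a c unfolding pw_def by blast
  have "\<forall>x\<in>{u..v}. f x = 2 powr (real_of_int k) * x + b" using kb a c by auto
  thus ?thesis by blast
qed

lemma pw_strict:
  assumes "pw D f" "0 \<le> x" "x < y" "y \<le> 1"
  shows "f x < f y"
proof -
  have fin: "finite D" using assms(1) by (simp add: pw_def)
  have "\<forall>x y. card ({x<..<y} \<inter> D) = n \<longrightarrow> 0 \<le> x \<longrightarrow> x < y \<longrightarrow> y \<le> 1 \<longrightarrow> f x < f y" for n
  proof (induction n rule: less_induct)
    case (less n)
    show ?case
    proof (intro allI impI)
      fix x y assume c: "card ({x<..<y} \<inter> D) = n" and xy: "0\<le>x" "x<y" "y\<le>1"
      show "f x < f y"
      proof (cases "{x<..<y} \<inter> D = {}")
        case True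
        then obtain k b where kb: "\<forall>t\<in>{x..y}. f t = 2 powr (real_of_int k) * t + b"
          using pw_piece[OF assms(1) xy(1,2,3)] by blast
        have "2 powr (real_of_int k) * x < 2 powr (real_of_int k) * y"
          using xy by (simp add: mult_strict_left_mono)
        then show ?thesis using kb xy by simp
      next
        case False
        then obtain e where e: "x < e" "e < y" "e\<in>D" by auto
        have "{x<..<e} \<inter> D \<subset> {x<..<y} \<inter> D" using e by auto
        then have c1: "card ({x<..<e} \<inter> D) < n" using c fin by (metis psubset_card_mono finite_Int)
        have "{e<..<y} \<inter> D \<subset> {x<..<y} \<inter> D" using e by auto
        then have c2: "card ({e<..<y} \<inter> D) < n" using c fin by (metis psubset_card_mono finite_Int)
        have "f x < f e" using less.IH[OF c1] xy e by auto
        moreover have "f e < f y" using less.IH[OF c2] xy e by auto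
        ultimately show ?thesis by simp
      qed
    qed
  qed
  thus ?thesis using assms by blast
qed

lemma pw_cover:
  assumes "pw D f" "0 \<le> x" "x \<le> 1"
  shows "\<exists>u\<in>D. \<exists>v\<in>D. u < v \<and> {u<..<v} \<inter> D = {} \<and> x \<in> {u..v}"
proof -
  have fin: "finite D" and z: "0\<in>D" and o: "1\<in>D" using assms(1) by (auto simp: pw_def)
  show ?thesis
  proof (cases "x < 1")
    case True
    let ?L = "{d\<in>D. d \<le> x}" and ?R = "{d\<in>D. x < d}"
    have L: "?L \<noteq> {}" "finite ?L" using z assms fin by auto
    have R: "?R \<noteq> {}" "finite ?R" using o True fin by auto
    define a where "a = Max ?L"
    define c where "c = Min ?R"
    have a: "a \<in> D" "a \<le> x" using Max_in[OF L(2) L(1)] unfolding a_def by auto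
    have c: "c \<in> D" "x < c" using Min_in[OF R(2) R(1)] unfolding c_def by auto
    have "{a<..<c} \<inter> D = {}"
    proof (rule ccontr)
      assume "{a<..<c} \<inter> D \<noteq> {}"
      then obtain e where e: "a < e" "e < c" "e \<in> D" by auto
      show False
      proof (cases "e \<le> x")
        case True
        then have "e \<le> a" unfolding a_def using L e by (auto intro: Max_ge)
        then show False using e by simp
      next
        case False
        then have "c \<le> e" unfolding c_def using R e by (auto intro: Min_le)
        then show False using e by simp
      qed
    qed
    then show ?thesis using a c by (intro bexI[of _ a] bexI[of _ c]) auto
  next
    case False
    then have x1: "x = 1" using assms by simp
    let ?L = "{d\<in>D. d < 1}"
    have L: "?L \<noteq> {}" "finite ?L" using z fin by auto
    define a where "a = Max ?L"
    have a: "a \<in> D" "a < 1" using Max_in[OF L(2) L(1)] unfolding a_def by auto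
    have "{a<..<1} \<inter> D = {}"
    proof (rule ccontr)
      assume "{a<..<1} \<inter> D \<noteq> {}"
      then obtain e where e: "a < e" "e < 1" "e \<in> D" by auto
      then have "e \<le> a" unfolding a_def using L e by (auto intro: Max_ge)
      then show False using e by simp
    qed
    then show ?thesis using a o x1 by (intro bexI[of _ a] bexI[of _ 1]) auto
  qed
qed

lemma pw_cont:
  assumes "pw D f" shows "continuous_on {0..1} f"
proof -
  let ?I = "{(u,v). u\<in>D \<and> v\<in>D \<and> u<v \<and> {u<..<v}\<inter>D = {}}"
  have fin: "finite D" and sub: "D \<subseteq> {0..1}" using assms(1) by (auto simp: pw_def)
  have "?I \<subseteq> D \<times> D" by auto
  then have finI: "finite ?I" using fin by (meson finite_SigmaI finite_subset)
  have eq: "{0..1} = (\<Union>p\<in>?I. {fst p..snd p})"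
  proof
    show "{0..1} \<subseteq> (\<Union>p\<in>?I. {fst p..snd p})"
    proof
      fix x assume "x \<in> {0..(1::real)}"
      then obtain u v where "u\<in>D" "v\<in>D" "u < v" "{u<..<v} \<inter> D = {}" "x \<in> {u..v}"
        using pw_cover[OF assms] by force
      then show "x \<in> (\<Union>p\<in>?I. {fst p..snd p})" by (intro UN_I[of "(u,v)"]) auto
    qed
    show "(\<Union>p\<in>?I. {fst p..snd p}) \<subseteq> {0..1}" using sub by force
  qed
  have "continuous_on (\<Union>p\<in>?I. {fst p..snd p}) f"
  proof (rule continuous_on_closed_Union[OF finI])
    fix p assume pI: "p \<in> ?I"
    obtain u v where p: "p = (u,v)" by (cases p)
    have "u\<in>D" "v\<in>D" "u<v" "{u<..<v}\<inter>D = {}" using pI p by auto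
    then obtain k b where kb: "\<forall>x\<in>{fst p..snd p}. f x = 2 powr (real_of_int k) * x + b"
      using assms p unfolding pw_def by (metis fst_conv snd_conv)
    have "continuous_on {fst p..snd p} (\<lambda>x. 2 powr (real_of_int k) * x + b)"
      by (intro continuous_intros)
    then show "continuous_on {fst p..snd p} f"
      using kb by (metis (no_types, lifting) continuous_on_eq)
  qed auto
  thus ?thesis using eq by simp
qed




lemma sorted_facts:
  assumes "sorted_wrt (<) (xs::real list)"
  shows "\<And>i j. i < j \<Longrightarrow> j < length xs \<Longrightarrow> xs!i < xs!j"
    and "\<And>i j. i \<le> j \<Longrightarrow> j < length xs \<Longrightarrow> xs!i \<le> xs!j"
    and "\<And>i j. xs!i < xs!j \<Longrightarrow> i < length xs \<Longrightarrow> j < length xs \<Longrightarrow> i < j"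
proof -
  show lt: "\<And>i j. i < j \<Longrightarrow> j < length xs \<Longrightarrow> xs!i < xs!j"
    using assms by (simp add: sorted_wrt_iff_nth_less)
  show le: "\<And>i j. i \<le> j \<Longrightarrow> j < length xs \<Longrightarrow> xs!i \<le> xs!j"
    using lt by (metis le_less)
  show "\<And>i j. xs!i < xs!j \<Longrightarrow> i < length xs \<Longrightarrow> j < length xs \<Longrightarrow> i < j"
    using le by (meson not_le)
qed

lemma mkF:
  assumes pw: "pw D f" and f0: "f 0 = 0" and f1: "f 1 = 1"
    and out: "\<forall>x. x \<notin> {0..1} \<longrightarrow> f x = x"
  shows "f \<in> thompsonF_carrier"
proof -
  have fin: "finite D" and sub: "D \<subseteq> {0..1}" and z: "0 \<in> D" and o: "1\<in>D"
    and dy: "\<forall>x\<in>D. dyadic x"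
    using pw by (auto simp: pw_def)
  have sm: "strict_mono_on {0..1} f" unfolding strict_mono_on_def using pw_strict[OF pw] by auto
  have cont: "continuous_on {0..1} f" by (rule pw_cont[OF pw])
  have img: "f ` {0..1} = {0..1}"
  proof
    show "f ` {0..1} \<subseteq> {0..1}"
    proof
      fix y assume "y \<in> f ` {0..(1::real)}"
      then obtain x where x: "x \<in> {0..1}" "y = f x" by auto
      have "f 0 \<le> f x" using pw_strict[OF pw, of 0 x] x by (cases "x = 0") auto
      moreover have "f x \<le> f 1" using pw_strict[OF pw, of x 1] x by (cases "x = 1") auto
      ultimately show "y \<in> {0..1}" using x f0 f1 by auto
    qed
    show "{0..1} \<subseteq> f ` {0..1}"
    proof
      fix y :: real assume "y \<in> {0..1}"
      then obtain x where "0 \<le> x" "x \<le> 1" "f x = y" using IVT'[of f 0 y 1] f0 f1 cont by auto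
      then show "y \<in> f ` {0..1}" by force
    qed
  qed
  have inj: "inj_on f {0..1}" using sm by (rule strict_mono_on_imp_inj_on)
  obtain g where hom: "homeomorphism {0..1} {0..1} f g"
    using homeomorphism_compact[OF compact_Icc cont img inj] by blast
  define xs where "xs = sorted_list_of_set D"
  have setxs: "set xs = D" using fin by (simp add: xs_def)
  have sxs: "sorted_wrt (<) xs" unfolding xs_def by (rule strict_sorted_list_of_set)
  have lxs: "length xs = card D" unfolding xs_def by simp
  have "card {0, 1::real} \<le> card D" using fin z o by (intro card_mono) auto
  then have len: "length xs \<ge> 2" using lxs by simp
  note sf = sorted_facts[OF sxs]
  have inD: "i < length xs \<Longrightarrow> xs!i \<in> D" for i using setxs nth_mem by blast
  have ne: "xs \<noteq> []"
  proof
    assume "xs = []" with len show False by simp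
  qed
  have hd: "hd xs = 0"
  proof -
    obtain j where j: "j < length xs" "xs!j = 0" using z setxs by (metis in_set_conv_nth)
    have "xs!0 \<le> xs!j" using sf(2)[of 0 j] j by simp
    moreover have "0 < length xs" using len by linarith
    then have "xs!0 \<in> D" using inD[of 0] by blast
    then have "xs!0 \<ge> 0" using sub by auto
    ultimately show ?thesis using j len by (simp add: hd_conv_nth[OF ne])
  qed
  have la: "last xs = 1"
  proof -
    obtain j where j: "j < length xs" "xs!j = 1" using o setxs by (metis in_set_conv_nth)
    have l1: "length xs - 1 < length xs" using len by linarith
    have a1: "xs!j \<le> xs!(length xs - 1)" using sf(2)[of j "length xs - 1"] j l1 by linarith
    have "xs!(length xs - 1) \<in> D" using inD l1 by blast
    then have a2: "xs!(length xs - 1) \<le> 1" using sub by auto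
    have "xs!(length xs - 1) = 1" using a1 a2 j by linarith
    then show ?thesis by (simp add: last_conv_nth[OF ne])
  qed
  have pieces: "\<forall>i. Suc i < length xs \<longrightarrow>
     (\<exists>(k::int) (b::real). \<forall>x\<in>{xs!i..xs!Suc i}. f x = 2 powr (real_of_int k) * x + b)"
  proof (intro allI impI)
    fix i assume i: "Suc i < length xs"
    have lt: "xs!i < xs!Suc i" using sf(1) i by simp
    have "{xs!i<..<xs!Suc i} \<inter> D = {}"
    proof (rule ccontr)
      assume "{xs!i<..<xs!Suc i} \<inter> D \<noteq> {}"
      then obtain e where e: "e\<in>D" "xs!i < e" "e < xs!Suc i" by auto
      obtain j where j: "j < length xs" "xs!j = e" using e setxs by (metis in_set_conv_nth)
      have "i < j" using sf(3)[of i j] e j i by simp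
      moreover have "j < Suc i" using sf(3)[of j "Suc i"] e j i by simp
      ultimately show False by simp
    qed
    then show "\<exists>(k::int) (b::real). \<forall>x\<in>{xs!i..xs!Suc i}. f x = 2 powr (real_of_int k) * x + b"
      using pw inD[of i] inD[of "Suc i"] i lt unfolding pw_def by auto
  qed
  have dxs: "\<forall>x\<in>set xs. dyadic x" using dy setxs by simp
  have "\<exists>xs::real list. length xs \<ge> 2 \<and> sorted_wrt (<) xs \<and>
        hd xs = 0 \<and> last xs = 1 \<and> (\<forall>x\<in>set xs. dyadic x) \<and>
        (\<forall>i. Suc i < length xs \<longrightarrow>
           (\<exists>(k::int) (b::real). \<forall>x\<in>{xs!i..xs!Suc i}. f x = 2 powr (real_of_int k) * x + b))"
    using len sxs hd la dxs pieces by blast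
  then show ?thesis unfolding thompsonF_carrier_def using hom sm out by blast
qed

lemma carrier_pw: assumes "f \<in> thompsonF_carrier" shows "\<exists>D. pw D f"
proof -
  obtain xs where len: "length xs \<ge> 2" and sxs: "sorted_wrt (<) xs" and hd: "hd xs = 0"
    and la: "last xs = 1" and dy: "\<forall>x\<in>set xs. dyadic x"
    and pc: "\<forall>i. Suc i < length xs \<longrightarrow> (\<exists>(k::int) (b::real). \<forall>x\<in>{xs!i..xs!Suc i}. f x = 2 powr (real_of_int k) * x + b)"
    using assms unfolding thompsonF_carrier_def by blast
  note sf = sorted_facts[OF sxs]
  have ne: "xs \<noteq> []" using len by auto
  have sub: "set xs \<subseteq> {0..1}"
  proof
    fix x assume "x \<in> set xs"
    then obtain j where j: "j<length xs" "xs!j = x" by (metis in_set_conv_nth)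
    have "xs!0 \<le> xs!j" using sf(2)[of 0 j] j by simp
    moreover have "xs!j \<le> xs!(length xs - 1)" using sf(2)[of j "length xs - 1"] j by simp
    ultimately show "x \<in> {0..1}" using hd la ne j by (simp add: hd_conv_nth last_conv_nth)
  qed
  have "pw (set xs) f" unfolding pw_def
  proof (intro conjI ballI impI)
    show "finite (set xs)" by simp
    show "set xs \<subseteq> {0..1}" by (rule sub)
    show "0 \<in> set xs" using hd ne hd_in_set by metis
    show "1 \<in> set xs" using la ne last_in_set by metis
    show "dyadic x" if "x \<in> set xs" for x using dy that by blast
    fix u v assume u: "u \<in> set xs" and v: "v \<in> set xs" and uv: "u < v"
      and em: "{u<..<v} \<inter> set xs = {}"
    obtain i where i: "i < length xs" "xs!i = u" using u by (metis in_set_conv_nth)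
    obtain j where j: "j < length xs" "xs!j = v" using v by (metis in_set_conv_nth)
    have ij: "i < j" using sf(3) i j uv by simp
    have "j = Suc i"
    proof (rule ccontr)
      assume "j \<noteq> Suc i" then have sj: "Suc i < j" using ij by simp
      then have "xs!i < xs!Suc i" "xs!Suc i < xs!j" using sf(1) j by auto
      moreover have "xs!Suc i \<in> set xs" using sj j by simp
      ultimately show False using em i j by auto
    qed
    then show "\<exists>k::int. \<exists>b. \<forall>x\<in>{u..v}. f x = 2 powr (real_of_int k) * x + b"
      using pc i j by blast
  qed
  thus ?thesis by blast
qed

lemma carrier_basic:
  assumes "f \<in> thompsonF_carrier"
  shows "strict_mono_on {0..1} f" "continuous_on {0..1} f" "f ` {0..1} = {0..1}"
    "\<forall>x. x\<notin>{0..1} \<longrightarrow> f x = x"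
  using assms unfolding thompsonF_carrier_def homeomorphism_def by auto

lemma carrier_01: assumes "f \<in> thompsonF_carrier" shows "f 0 = 0" "f 1 = 1"
proof -
  note b = carrier_basic[OF assms]
  have "0 \<in> f ` {0..1}" using b(3) by simp
  then obtain x where x: "x\<in>{0..1}" "f x = 0" by auto
  have "f 0 \<in> {0..1}" using b(3) by auto
  moreover have "f 0 \<le> f x" using strict_mono_onD[OF b(1), of 0 x] x by (cases "x=0") auto
  ultimately show "f 0 = 0" using x by simp
  have "1 \<in> f ` {0..1}" using b(3) by simp
  then obtain y where y: "y\<in>{0..1}" "f y = 1" by auto
  have "f 1 \<in> {0..1}" using b(3) by auto
  moreover have "f y \<le> f 1" using strict_mono_onD[OF b(1), of y 1] y by (cases "y=1") auto
  ultimately show "f 1 = 1" using y by simp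
qed

lemma carrier_mono: assumes "f \<in> thompsonF_carrier" "x < y" shows "f x < f y"
proof -
  note b = carrier_basic[OF assms(1)]
  have fx: "x \<in> {0..1} \<Longrightarrow> f x \<in> {0..1}" using b(3) by auto
  have fy: "y \<in> {0..1} \<Longrightarrow> f y \<in> {0..1}" using b(3) by auto
  show ?thesis
  proof (cases "x \<in> {0..1}")
    case True
    show ?thesis
    proof (cases "y \<in> {0..1}")
      case True
      then show ?thesis using \<open>x \<in> {0..1}\<close> strict_mono_onD[OF b(1), of x y] assms(2) by auto
    next
      case False
      then show ?thesis using True b(4) fx assms(2) by auto
    qed
  next
    case False
    show ?thesis
    proof (cases "y \<in> {0..1}")
      case True
      then show ?thesis using False b(4) fy assms(2) by auto
    next
      case False
      then show ?thesis using \<open>x \<notin> {0..1}\<close> b(4) assms(2) by auto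
    qed
  qed
qed

lemma carrier_less_iff: "f \<in> thompsonF_carrier \<Longrightarrow> f x < f y \<longleftrightarrow> x < y"
  by (metis carrier_mono linorder_neq_iff order_less_asym)

lemma carrier_le_iff: "f \<in> thompsonF_carrier \<Longrightarrow> f x \<le> f y \<longleftrightarrow> x \<le> y"
  by (meson carrier_less_iff not_le)




lemma powr_cancel: "(2::real) powr real_of_int (-k) * (2 powr real_of_int k * y) = y"
proof -
  have "(2::real) powr real_of_int (-k) * 2 powr real_of_int k = 1"
    by (simp add: powr_minus)
  then show ?thesis by (metis mult.assoc mult_1)
qed

lemma pw_dyadic_img:
  assumes pw: "pw D f" and f0: "f 0 = 0" and xD: "x \<in> D"
  shows "dyadic (f x)"
proof -
  have fin: "finite D" and sub: "D \<subseteq> {0..1}" and z: "0 \<in> D" and dy: "\<forall>x\<in>D. dyadic x"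
    using pw by (auto simp: pw_def)
  have "\<forall>x. card {d\<in>D. d < x} = n \<longrightarrow> x \<in> D \<longrightarrow> dyadic (f x)" for n
  proof (induction n rule: less_induct)
    case (less n)
    show ?case
    proof (intro allI impI)
      fix x assume c: "card {d\<in>D. d<x} = n" and x: "x\<in>D"
      show "dyadic (f x)"
      proof (cases "x = 0")
        case True then show ?thesis using f0 dyadic_int[of 0] by simp
      next
        case False
        then have x0: "0 < x" using x sub by force
        let ?L = "{d\<in>D. d < x}"
        have L: "?L \<noteq> {}" "finite ?L" using z x0 fin by auto
        define u where "u = Max ?L"
        have u: "u \<in> D" "u < x" using Max_in[OF L(2) L(1)] unfolding u_def by auto
        have em: "{u<..<x} \<inter> D = {}"
        proof (rule ccontr)
          assume "{u<..<x} \<inter> D \<noteq> {}"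
          then obtain e where e: "u<e" "e<x" "e\<in>D" by auto
          then have "e \<le> u" unfolding u_def using L by (auto intro: Max_ge)
          then show False using e by simp
        qed
        obtain k b where kb: "\<forall>t\<in>{u..x}. f t = 2 powr real_of_int k * t + b"
          using pw u x em unfolding pw_def by blast
        have "{d\<in>D. d<u} \<subset> ?L" using u by auto
        then have "card {d\<in>D. d<u} < n" using c L(2) psubset_card_mono by metis
        then have du: "dyadic (f u)" using less.IH u by blast
        have e1: "f x = 2 powr real_of_int k * x + b" "f u = 2 powr real_of_int k * u + b"
          using kb u by auto
        have "f x = f u + 2 powr real_of_int k * (x - u)" using e1 by (simp add: algebra_simps)
        moreover have "dyadic (2 powr real_of_int k * (x - u))"
          using dyadic_scale dyadic_diff dy x u by blast
        ultimately show ?thesis using dyadic_add du by simp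
      qed
    qed
  qed
  thus ?thesis using xD by blast
qed

lemma pw_dyadic_iff:
  assumes pw: "pw D f" and f0: "f 0 = 0" and x: "0 \<le> x" "x \<le> 1"
  shows "dyadic (f x) \<longleftrightarrow> dyadic x"
proof -
  obtain u v where uv: "u\<in>D" "v\<in>D" "u<v" "{u<..<v}\<inter>D = {}" "x \<in> {u..v}"
    using pw_cover[OF pw x] by blast
  obtain k b where kb: "\<forall>t\<in>{u..v}. f t = 2 powr real_of_int k * t + b"
    using pw uv unfolding pw_def by blast
  have e1: "f x = 2 powr real_of_int k * x + b" "f u = 2 powr real_of_int k * u + b"
    using kb uv by auto
  have fx: "f x = f u + 2 powr real_of_int k * (x - u)" using e1 by (simp add: algebra_simps)
  have du: "dyadic u" using pw uv unfolding pw_def by blast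
  have dfu: "dyadic (f u)" using pw_dyadic_img[OF pw f0 uv(1)] .
  have d: "f x - f u = 2 powr real_of_int k * (x - u)" using fx by simp
  have "2 powr real_of_int (-k) * (f x - f u) = x - u" unfolding d by (rule powr_cancel)
  then have inv: "x = u + 2 powr real_of_int (-k) * (f x - f u)" by linarith
  show ?thesis
  proof
    assume "dyadic (f x)"
    then have "dyadic (2 powr real_of_int (-k) * (f x - f u))" using dyadic_scale dyadic_diff dfu by blast
    then show "dyadic x" using inv dyadic_add du by metis
  next
    assume "dyadic x"
    then have "dyadic (2 powr real_of_int k * (x - u))" using dyadic_scale dyadic_diff du by blast
    then show "dyadic (f x)" using fx dyadic_add dfu by metis
  qed
qed




lemma carrier_comp:
  assumes f: "f \<in> thompsonF_carrier" and g: "g \<in> thompsonF_carrier"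
  shows "f \<circ> g \<in> thompsonF_carrier"
proof -
  obtain Df where pf: "pw Df f" using carrier_pw f by blast
  obtain Dg where pg: "pw Dg g" using carrier_pw g by blast
  note bf = carrier_basic[OF f] and bg = carrier_basic[OF g]
  note f01 = carrier_01[OF f] and g01 = carrier_01[OF g]
  define D where "D = Dg \<union> (g -` Df \<inter> {0..1})"
  have finf: "finite Df" and subf: "Df \<subseteq> {0..1}" and dyf: "\<forall>x\<in>Df. dyadic x"
    using pf by (auto simp: pw_def)
  have fing: "finite Dg" and subg: "Dg \<subseteq> {0..1}" and zg: "0 \<in> Dg" and og: "1 \<in> Dg"
    and dyg: "\<forall>x\<in>Dg. dyadic x"
    using pg by (auto simp: pw_def)
  have injg: "inj_on g {0..1}" using bg(1) by (rule strict_mono_on_imp_inj_on)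
  have pwD: "pw D (f \<circ> g)" unfolding pw_def
  proof (intro conjI ballI impI)
    show "finite D" unfolding D_def using fing finite_vimage_IntI[OF finf injg] by simp
    show "D \<subseteq> {0..1}" unfolding D_def using subg by auto
    show "0 \<in> D" "1 \<in> D" unfolding D_def using zg og by auto
    show "dyadic x" if "x \<in> D" for x
    proof (cases "x \<in> Dg")
      case True then show ?thesis using dyg by blast
    next
      case False
      then have "x \<in> {0..1}" "g x \<in> Df" using that unfolding D_def by auto
      then show ?thesis using pw_dyadic_iff[OF pg g01(1)] dyf by auto
    qed
    fix u v assume u: "u \<in> D" and v: "v \<in> D" and uv: "u < v" and em: "{u<..<v} \<inter> D = {}"
    have u01: "u \<in> {0..1}" and v01: "v \<in> {0..1}" using u v subg unfolding D_def by auto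
    have "{u<..<v} \<inter> Dg = {}" using em unfolding D_def by auto
    then obtain k1 b1 where kb1: "\<forall>x\<in>{u..v}. g x = 2 powr real_of_int k1 * x + b1"
      using pw_piece[OF pg _ uv] u01 v01 by auto
    have guv: "g u < g v" using carrier_mono[OF g uv] .
    have gu01: "g u \<in> {0..1}" "g v \<in> {0..1}" using bg(3) u01 v01 by auto
    have "{g u<..<g v} \<inter> Df = {}"
    proof (rule ccontr)
      assume "{g u<..<g v} \<inter> Df \<noteq> {}"
      then obtain e where e: "g u < e" "e < g v" "e \<in> Df" by auto
      then have "e \<in> g ` {0..1}" using subf bg(3) by auto
      then obtain w where w: "w \<in> {0..1}" "g w = e" by auto
      have "u < w" "w < v" using e w carrier_less_iff[OF g] by auto
      moreover have "w \<in> D" using w e unfolding D_def by auto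
      ultimately show False using em by auto
    qed
    then obtain k2 b2 where kb2: "\<forall>y\<in>{g u..g v}. f y = 2 powr real_of_int k2 * y + b2"
      using pw_piece[OF pf _ guv] gu01 by auto
    have "\<forall>x\<in>{u..v}. (f \<circ> g) x = 2 powr real_of_int (k2 + k1) * x + (2 powr real_of_int k2 * b1 + b2)"
    proof
      fix x assume x: "x \<in> {u..v}"
      have gx: "g x \<in> {g u..g v}" using x carrier_le_iff[OF g] by auto
      have "(f \<circ> g) x = 2 powr real_of_int k2 * (2 powr real_of_int k1 * x + b1) + b2"
        using kb1 kb2 x gx by simp
      also have "\<dots> = 2 powr real_of_int (k2 + k1) * x + (2 powr real_of_int k2 * b1 + b2)"
        by (simp add: powr_add algebra_simps)
      finally show "(f \<circ> g) x = 2 powr real_of_int (k2 + k1) * x + (2 powr real_of_int k2 * b1 + b2)" .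
    qed
    then show "\<exists>k::int. \<exists>b. \<forall>x\<in>{u..v}. (f \<circ> g) x = 2 powr real_of_int k * x + b" by blast
  qed
  show ?thesis
  proof (rule mkF[OF pwD])
    show "(f \<circ> g) 0 = 0" "(f \<circ> g) 1 = 1" using f01 g01 by auto
    show "\<forall>x. x \<notin> {0..1} \<longrightarrow> (f \<circ> g) x = x" using bf(4) bg(4) by auto
  qed
qed

lemma carrier_inv:
  assumes f: "f \<in> thompsonF_carrier"
  shows "\<exists>h \<in> thompsonF_carrier. h \<circ> f = id \<and> f \<circ> h = id"
proof -
  obtain Df where pf: "pw Df f" using carrier_pw f by blast
  note bf = carrier_basic[OF f] and f01 = carrier_01[OF f]
  obtain g where hom: "homeomorphism {0..1} {0..1} f g"
    using f unfolding thompsonF_carrier_def by blast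
  have gf: "\<And>x. x \<in> {0..1} \<Longrightarrow> g (f x) = x" and fg: "\<And>y. y \<in> {0..1} \<Longrightarrow> f (g y) = y"
    and gimg: "g ` {0..1} = {0..1}"
    using hom unfolding homeomorphism_def by auto
  define h where "h = (\<lambda>y. if y \<in> {0..1} then g y else y)"
  have finf: "finite Df" and subf: "Df \<subseteq> {0..1}" and zf: "0 \<in> Df" and of: "1 \<in> Df"
    using pf by (auto simp: pw_def)
  have pwh: "pw (f ` Df) h" unfolding pw_def
  proof (intro conjI ballI impI)
    show "finite (f ` Df)" using finf by simp
    show "f ` Df \<subseteq> {0..1}" using subf bf(3) by auto
    show "0 \<in> f ` Df" using zf f01 by force
    show "1 \<in> f ` Df" using of f01 by force
    show "dyadic x" if "x \<in> f ` Df" for x using that pw_dyadic_img[OF pf f01(1)] by auto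
    fix u' v' assume u': "u' \<in> f ` Df" and v': "v' \<in> f ` Df" and uv': "u' < v'"
      and em: "{u'<..<v'} \<inter> f ` Df = {}"
    obtain u where u: "u \<in> Df" "u' = f u" using u' by auto
    obtain v where v: "v \<in> Df" "v' = f v" using v' by auto
    have uv: "u < v" using uv' u v carrier_less_iff[OF f] by simp
    have "{u<..<v} \<inter> Df = {}"
    proof (rule ccontr)
      assume "{u<..<v} \<inter> Df \<noteq> {}"
      then obtain e where e: "u < e" "e < v" "e \<in> Df" by auto
      then have "f e \<in> {u'<..<v'} \<inter> f ` Df" using u v carrier_less_iff[OF f] by auto
      then show False using em by blast
    qed
    then obtain k b where kb: "\<forall>x\<in>{u..v}. f x = 2 powr real_of_int k * x + b"
      using pf u v uv unfolding pw_def by blast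
    have "\<forall>y\<in>{u'..v'}. h y = 2 powr real_of_int (-k) * y + (- (2 powr real_of_int (-k) * b))"
    proof
      fix y assume y: "y \<in> {u'..v'}"
      have "f u \<in> f ` {0..1}" "f v \<in> f ` {0..1}" using u(1) v(1) subf by blast+
      then have "u' \<in> {0..1}" "v' \<in> {0..1}" using u(2) v(2) bf(3) by auto
      then have y01: "y \<in> {0..1}" using y by auto
      define x where "x = g y"
      have x01: "x \<in> {0..1}" using gimg y01 unfolding x_def by auto
      have fx: "f x = y" using fg y01 unfolding x_def by simp
      have "f u \<le> f x" "f x \<le> f v" using y u v fx by auto
      then have "x \<in> {u..v}" using carrier_le_iff[OF f, of u x] carrier_le_iff[OF f, of x v] by auto
      then have "y = 2 powr real_of_int k * x + b" using kb fx by auto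
      then have d: "y - b = 2 powr real_of_int k * x" by simp
      have "x = 2 powr real_of_int (-k) * (y - b)" unfolding d by (rule powr_cancel[symmetric])
      then show "h y = 2 powr real_of_int (-k) * y + (- (2 powr real_of_int (-k) * b))"
        using y01 unfolding h_def x_def by (simp add: algebra_simps)
    qed
    then show "\<exists>k::int. \<exists>b. \<forall>x\<in>{u'..v'}. h x = 2 powr real_of_int k * x + b" by blast
  qed
  have h0: "h 0 = 0" using gf[of 0] f01 unfolding h_def by simp
  have h1: "h 1 = 1" using gf[of 1] f01 unfolding h_def by simp
  have hin: "h \<in> thompsonF_carrier" using mkF[OF pwh h0 h1] unfolding h_def by auto
  have "h \<circ> f = id"
  proof
    fix x show "(h \<circ> f) x = id x"
    proof (cases "x \<in> {0..1}")
      case True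
      then have "f x \<in> {0..1}" using bf(3) by auto
      then show ?thesis using gf True unfolding h_def by simp
    next
      case False
      then have "f x = x" using bf(4) by blast
      then show ?thesis using False unfolding h_def by auto
    qed
  qed
  moreover have "f \<circ> h = id"
  proof
    fix y show "(f \<circ> h) y = id y"
    proof (cases "y \<in> {0..1}")
      case True
      then show ?thesis using fg unfolding h_def by simp
    next
      case False
      then have "f y = y" using bf(4) by blast
      then show ?thesis using False unfolding h_def by auto
    qed
  qed
  ultimately show ?thesis using hin by blast
qed

lemma id_in: "id \<in> thompsonF_carrier"
proof (rule mkF)
  show "pw {0,1} id" unfolding pw_def
  proof (intro conjI ballI impI)
    show "dyadic x" if "x \<in> {0,1}" for x
      using that dyadic_int[of 0] dyadic_int[of 1] by auto
    fix u v :: real assume "u \<in> {0,1}" "v \<in> {0,1}" "u < v"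
    show "\<exists>k::int. \<exists>b. \<forall>x\<in>{u..v}. id x = 2 powr real_of_int k * x + b"
      by (rule exI[of _ 0], rule exI[of _ 0]) simp
  qed auto
qed auto

lemma group_F: "group thompsonF"
proof (rule groupI)
  show "x \<otimes>\<^bsub>thompsonF\<^esub> y \<in> carrier thompsonF"
    if "x \<in> carrier thompsonF" "y \<in> carrier thompsonF" for x y
    using that carrier_comp unfolding thompsonF_def by simp
  show "\<one>\<^bsub>thompsonF\<^esub> \<in> carrier thompsonF" using id_in unfolding thompsonF_def by simp
  show "x \<otimes>\<^bsub>thompsonF\<^esub> y \<otimes>\<^bsub>thompsonF\<^esub> z = x \<otimes>\<^bsub>thompsonF\<^esub> (y \<otimes>\<^bsub>thompsonF\<^esub> z)" for x y z
    unfolding thompsonF_def by (simp add: o_assoc)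
  show "\<one>\<^bsub>thompsonF\<^esub> \<otimes>\<^bsub>thompsonF\<^esub> x = x" for x unfolding thompsonF_def by simp
  show "\<exists>y\<in>carrier thompsonF. y \<otimes>\<^bsub>thompsonF\<^esub> x = \<one>\<^bsub>thompsonF\<^esub>"
    if "x \<in> carrier thompsonF" for x
    using that carrier_inv unfolding thompsonF_def by auto
qed




definition bump :: "real \<Rightarrow> real \<Rightarrow> real \<Rightarrow> real" where
 "bump p L x = (if x < p then x else if x \<le> p + L then 2*x - p else if x \<le> p + 2*L then x + L
     else if x \<le> p + 4*L then x/2 + p/2 + 2*L else x)"

lemma powr_1: "(2::real) powr real_of_int 1 = 2" unfolding of_int_1 by (rule powr_one) simp
lemma powr_m1: "(2::real) powr real_of_int (-1) = 1/2" unfolding of_int_minus of_int_1 by (rule powr_neg_one) simp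
lemma powr_0': "(2::real) powr real_of_int 0 = 1" unfolding of_int_0 by simp

lemma bump_r1: assumes "0 < L" "x \<le> p" shows "bump p L x = x"
proof (cases "x < p")
  case True then show ?thesis by (simp add: bump_def)
next
  case False then have "x = p" using assms by simp
  then show ?thesis using assms by (simp add: bump_def)
qed
lemma bump_r2: assumes "p \<le> x" "x \<le> p+L" shows "bump p L x = 2*x - p"
proof -
  have "\<not> x < p" using assms by simp
  then show ?thesis using assms by (simp add: bump_def)
qed
lemma bump_r3: assumes "0 < L" "p+L \<le> x" "x \<le> p+2*L" shows "bump p L x = x + L"
proof -
  have a: "\<not> x < p" using assms by simp
  show ?thesis
  proof (cases "x \<le> p + L")
    case True then have "x = p + L" using assms by simp
    then show ?thesis using a assms by (simp add: bump_def)
  next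
    case False then show ?thesis using a assms by (simp add: bump_def)
  qed
qed
lemma bump_r4: assumes "0 < L" "p+2*L \<le> x" "x \<le> p+4*L" shows "bump p L x = x/2 + p/2 + 2*L"
proof -
  have a: "\<not> x < p" "\<not> x \<le> p + L" using assms by simp_all
  show ?thesis
  proof (cases "x \<le> p + 2*L")
    case True
    then have "bump p L x = x + L" using a by (simp add: bump_def)
    moreover have "x = p + 2*L" using True assms by simp
    ultimately show ?thesis by linarith
  next
    case False then show ?thesis using a assms by (simp add: bump_def)
  qed
qed
lemma bump_r5: assumes "0 < L" "p+4*L \<le> x" shows "bump p L x = x"
proof -
  have a: "\<not> x < p" "\<not> x \<le> p + L" "\<not> x \<le> p + 2*L" using assms by simp_all
  show ?thesis
  proof (cases "x \<le> p + 4*L")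
    case True
    then have "bump p L x = x/2 + p/2 + 2*L" using a by (simp add: bump_def)
    moreover have "x = p + 4*L" using True assms by simp
    ultimately show ?thesis by linarith
  next
    case False then show ?thesis using a assms by (simp add: bump_def)
  qed
qed

lemma bump_in:
  assumes dp: "dyadic p" and dL: "dyadic L" and p0: "0 \<le> p" and L0: "0 < L" and p4: "p + 4*L \<le> 1"
  shows "bump p L \<in> thompsonF_carrier"
proof (rule mkF)
  let ?D = "{0, p, p+L, p+2*L, p+4*L, 1::real}"
  show "pw ?D (bump p L)" unfolding pw_def
  proof (intro conjI ballI impI)
    show "finite ?D" by simp
    show "?D \<subseteq> {0..1}" using p0 L0 p4 by auto
    show "0 \<in> ?D" "1 \<in> ?D" by auto
    have "2*L = L + L" by simp
    then have d2: "dyadic (2*L)" using dyadic_add[OF dL dL] by metis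
    have "4*L = 2*L + 2*L" by simp
    then have d4: "dyadic (4*L)" using dyadic_add[OF d2 d2] by metis
    have e0: "dyadic 0" using dyadic_int[of 0] by simp
    have e1: "dyadic 1" using dyadic_int[of 1] by simp
    have ep1: "dyadic (p+L)" by (rule dyadic_add[OF dp dL])
    have ep2: "dyadic (p+2*L)" by (rule dyadic_add[OF dp d2])
    have ep4: "dyadic (p+4*L)" by (rule dyadic_add[OF dp d4])
    show "dyadic x" if "x \<in> ?D" for x
      using that e0 e1 dp ep1 ep2 ep4 by blast
    fix u v assume u: "u \<in> ?D" and v: "v \<in> ?D" and uv: "u < v" and em: "{u<..<v} \<inter> ?D = {}"
    have c1: "p \<le> u \<or> v \<le> p"
    proof (rule ccontr)
      assume "\<not> (p \<le> u \<or> v \<le> p)"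
      then have "p \<in> {u<..<v} \<inter> ?D" by auto
      then show False using em by blast
    qed
    have c2: "p+L \<le> u \<or> v \<le> p+L"
    proof (rule ccontr)
      assume "\<not> (p+L \<le> u \<or> v \<le> p+L)"
      then have "p+L \<in> {u<..<v} \<inter> ?D" by auto
      then show False using em by blast
    qed
    have c3: "p+2*L \<le> u \<or> v \<le> p+2*L"
    proof (rule ccontr)
      assume "\<not> (p+2*L \<le> u \<or> v \<le> p+2*L)"
      then have "p+2*L \<in> {u<..<v} \<inter> ?D" by auto
      then show False using em by blast
    qed
    have c4: "p+4*L \<le> u \<or> v \<le> p+4*L"
    proof (rule ccontr)
      assume "\<not> (p+4*L \<le> u \<or> v \<le> p+4*L)"
      then have "p+4*L \<in> {u<..<v} \<inter> ?D" by auto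
      then show False using em by blast
    qed
    show "\<exists>k::int. \<exists>b. \<forall>x\<in>{u..v}. bump p L x = 2 powr real_of_int k * x + b"
    proof -
      consider "v \<le> p" | "p \<le> u" "v \<le> p+L" | "p+L \<le> u" "v \<le> p+2*L" | "p+2*L \<le> u" "v \<le> p+4*L"
        | "p+4*L \<le> u"
        using c1 c2 c3 c4 uv L0 by linarith
      then show ?thesis
      proof cases
        case 1
        then have "\<forall>x\<in>{u..v}. bump p L x = 2 powr real_of_int 0 * x + 0"
          using bump_r1[OF L0] by auto
        then show ?thesis by blast
      next
        case 2
        then have "\<forall>x\<in>{u..v}. bump p L x = 2 powr real_of_int 1 * x + (-p)"
          unfolding powr_1 using bump_r2[of p] 2 by auto
        then show ?thesis by blast
      next
        case 3
        then have "\<forall>x\<in>{u..v}. bump p L x = 2 powr real_of_int 0 * x + L"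
          using bump_r3[OF L0] by auto
        then show ?thesis by blast
      next
        case 4
        then have "\<forall>x\<in>{u..v}. bump p L x = 2 powr real_of_int (-1) * x + (p/2 + 2*L)"
          unfolding powr_m1 using bump_r4[OF L0] by auto
        then show ?thesis by blast
      next
        case 5
        then have "\<forall>x\<in>{u..v}. bump p L x = 2 powr real_of_int 0 * x + 0"
          using bump_r5[OF L0] by auto
        then show ?thesis by blast
      qed
    qed
  qed
  show "bump p L 0 = 0" using p0 L0 by (auto simp: bump_def)
  show "bump p L 1 = 1" using p4 L0 by (auto simp: bump_def)
  show "\<forall>x. x \<notin> {0..1} \<longrightarrow> bump p L x = x" using p0 p4 L0 by (auto simp: bump_def)
qed

lemma bump_out: assumes "0 < L" "s \<notin> {p<..<p+4*L}" shows "bump p L s = s"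
proof -
  have "s \<le> p \<or> p + 4*L \<le> s" using assms(2) by auto
  then show ?thesis using bump_r1[OF assms(1)] bump_r5[OF assms(1)] by blast
qed

lemma bump_gt: assumes "0 < L" "s \<in> {p<..<p+4*L}" shows "s < bump p L s \<and> bump p L s < p + 4*L"
proof -
  have s: "p < s" "s < p + 4*L" using assms(2) by auto
  consider "s \<le> p + L" | "p + L \<le> s" "s \<le> p + 2*L" | "p + 2*L \<le> s" by linarith
  then show ?thesis
  proof cases
    case 1 then show ?thesis using bump_r2[of p s L] s assms(1) by simp
  next
    case 2 then show ?thesis using bump_r3[OF assms(1), of p s] s assms(1) by simp
  next
    case 3 then show ?thesis using bump_r4[OF assms(1), of p s] s assms(1) by simp
  qed
qed

lemma dyadic_between: assumes "r < s" shows "\<exists>p. dyadic p \<and> r < p \<and> p < s"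
proof -
  obtain n where n: "(1/2::real)^n < s - r" using real_arch_pow_inv[of "s - r" "1/2"] assms by auto
  define m where "m = \<lfloor>r * 2^n\<rfloor> + 1"
  define p where "p = of_int m / (2::real)^n"
  have "r * 2^n < of_int m" unfolding m_def by linarith
  then have rp: "r < p" unfolding p_def by (simp add: field_simps)
  have "of_int m \<le> r * 2^n + 1" unfolding m_def by linarith
  then have "p \<le> r + 1/2^n" unfolding p_def by (simp add: field_simps)
  then have "p < s" using n by (simp add: power_divide)
  moreover have "dyadic p" unfolding dyadic_def p_def by blast
  ultimately show ?thesis using rp by blast
qed

lemma small_pow: assumes "(0::real) < e" shows "\<exists>n. 1/2^n < e"
proof -
  obtain n where "(1/2::real)^n < e" using real_arch_pow_inv[of e "1/2"] assms by auto
  then show ?thesis by (auto simp: power_divide)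
qed

lemma funpow_bump:
  fixes a b :: real
  assumes gin: "\<forall>s. s \<in> {a<..<b} \<longrightarrow> s < g s \<and> g s < b" and gout: "\<forall>s. s \<notin> {a<..<b} \<longrightarrow> g s = s"
  shows "\<forall>s. s \<in> {a<..<b} \<longrightarrow> s < (g^^Suc m) s \<and> (g^^Suc m) s < b"
    and "\<forall>s. s \<notin> {a<..<b} \<longrightarrow> (g^^m) s = s"
proof -
  show "\<forall>s. s \<in> {a<..<b} \<longrightarrow> s < (g^^Suc m) s \<and> (g^^Suc m) s < b"
  proof (induction m)
    case 0 then show ?case using gin by simp
  next
    case (Suc m)
    show ?case
    proof (intro allI impI)
      fix s assume s: "s \<in> {a<..<b}"
      define t where "t = (g^^Suc m) s"
      have t: "s < t" "t < b" using Suc s unfolding t_def by auto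
      then have "t \<in> {a<..<b}" using s by auto
      then have "t < g t" "g t < b" using gin by auto
      moreover have "(g^^Suc (Suc m)) s = g t" unfolding t_def by simp
      ultimately show "s < (g^^Suc (Suc m)) s \<and> (g^^Suc (Suc m)) s < b" using t by simp
    qed
  qed
  show "\<forall>s. s \<notin> {a<..<b} \<longrightarrow> (g^^m) s = s"
    by (induction m) (auto simp: gout)
qed

lemma pow_F: "g [^]\<^bsub>thompsonF\<^esub> (n::nat) = g ^^ n"
proof (induction n)
  case 0 then show ?case by (simp add: thompsonF_def)
next
  case (Suc n)
  have "g [^]\<^bsub>thompsonF\<^esub> Suc n = (g [^]\<^bsub>thompsonF\<^esub> n) \<circ> g"
    by (simp add: thompsonF_def)
  also have "\<dots> = g ^^ Suc n" using Suc by (simp only: funpow_Suc_right)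
  finally show ?case .
qed




lemma T_mult: "f \<otimes>\<^bsub>thompsonF\<^esub> g = f \<circ> g" by (simp add: thompsonF_def)
lemma T_one: "\<one>\<^bsub>thompsonF\<^esub> = id" by (simp add: thompsonF_def)
lemma T_carrier: "carrier thompsonF = thompsonF_carrier" by (simp add: thompsonF_def)

lemma conj_lemma:
  fixes a ai h hi :: "real \<Rightarrow> real" and p q :: real
  assumes a_mono: "\<forall>x y. x \<le> y \<longrightarrow> a x \<le> a y"
    and aai: "\<forall>x. a (ai x) = x"
    and hin: "\<forall>s. s \<in> {p<..<q} \<longrightarrow> s < h s \<and> h s < q"
    and hout: "\<forall>s. s \<notin> {p<..<q} \<longrightarrow> h s = s"
    and hhi: "\<forall>x. h (hi x) = x" and hih: "\<forall>x. hi (h x) = x"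
    and disj: "\<forall>s. s \<in> {p<..<q} \<longrightarrow> a s \<notin> {p<..<q}"
  shows "(a \<circ> h \<circ> ai \<circ> hi) s < s \<longleftrightarrow> s \<in> {p<..<q}"
proof -
  have A: "(a \<circ> h \<circ> ai \<circ> hi) s < s" if s: "s \<in> {p<..<q}" for s
  proof -
    define t where "t = hi s"
    have ht: "h t = s" using hhi unfolding t_def by simp
    have tin: "t \<in> {p<..<q}"
    proof (rule ccontr)
      assume tn: "t \<notin> {p<..<q}"
      then have "h t = t" using hout by blast
      then have "t = s" using ht by simp
      then show False using tn s by simp
    qed
    then have ts: "t < s" using hin ht by force
    have "ai t \<notin> {p<..<q}"
    proof
      assume "ai t \<in> {p<..<q}"
      then have "a (ai t) \<notin> {p<..<q}" using disj by blast
      then show False using aai tin by simp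
    qed
    then have "h (ai t) = ai t" using hout by blast
    then have "(a \<circ> h \<circ> ai \<circ> hi) s = t" using aai unfolding t_def by simp
    then show ?thesis using ts by simp
  qed
  have B: "\<not> (a \<circ> h \<circ> ai \<circ> hi) s < s" if s: "s \<notin> {p<..<q}" for s
  proof -
    have "h s = s" using hout s by blast
    then have his: "hi s = s" using hih by metis
    have "ai s \<le> h (ai s)"
    proof (cases "ai s \<in> {p<..<q}")
      case True then show ?thesis using hin by (simp add: less_imp_le)
    next
      case False then show ?thesis using hout by simp
    qed
    then have "a (ai s) \<le> a (h (ai s))" using a_mono by blast
    then show ?thesis using his aai by simp
  qed
  show ?thesis using A B by blast
qed

lemma comm_pres:
  fixes b c :: "real \<Rightarrow> real"
  assumes bm: "\<forall>x y. b x < b y \<longleftrightarrow> x < y" and bc: "b \<circ> c = c \<circ> b"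
    and cc: "\<forall>s. c s < s \<longleftrightarrow> s \<in> {p<..<q}"
  shows "\<forall>s. s \<in> {p<..<q} \<longrightarrow> b s \<in> {p<..<q}"
proof (intro allI impI)
  fix s assume s: "s \<in> {p<..<q}"
  then have "c s < s" using cc by blast
  then have "b (c s) < b s" using bm by blast
  moreover have "b (c s) = c (b s)" using fun_cong[OF bc, of s] by simp
  ultimately have "c (b s) < b s" by simp
  then show "b s \<in> {p<..<q}" using cc by blast
qed

lemma fix_end:
  fixes b bi :: "real \<Rightarrow> real"
  assumes pq: "p < q" and bm: "\<forall>x y. b x < b y \<longleftrightarrow> x < y" and bim: "\<forall>x y. bi x < bi y \<longleftrightarrow> x < y"
    and bbi: "\<forall>x. b (bi x) = x" and bib: "\<forall>x. bi (b x) = x"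
    and bp: "\<forall>s. s \<in> {p<..<q} \<longrightarrow> b s \<in> {p<..<q}"
    and bip: "\<forall>s. s \<in> {p<..<q} \<longrightarrow> bi s \<in> {p<..<q}"
  shows "b p = p"
proof -
  define m where "m = (p + q) / 2"
  have m: "m \<in> {p<..<q}" using pq unfolding m_def by auto
  have bmq: "b m < q" and bimq: "bi m < q" using bp bip m by auto
  show ?thesis
  proof (rule ccontr)
    assume ne: "b p \<noteq> p"
    show False
    proof (cases "p < b p")
      case True
      have "b p < b m" using bm m by auto
      then have "b p \<in> {p<..<q}" using True bmq by auto
      then have "bi (b p) \<in> {p<..<q}" using bip by blast
      then show False using bib by simp
    next
      case False
      then have "b p < p" using ne by simp
      then have "bi (b p) < bi p" using bim by blast
      then have c1: "p < bi p" using bib by simp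
      have "bi p < bi m" using bim m by auto
      then have "bi p \<in> {p<..<q}" using c1 bimq by auto
      then have "b (bi p) \<in> {p<..<q}" using bp by blast
      then show False using bbi by simp
    qed
  qed
qed

lemma pow_in_sub:
  assumes H: "subgroup H thompsonF" and fin: "finite (rcosets\<^bsub>thompsonF\<^esub> H)"
    and g: "g \<in> carrier thompsonF"
  shows "\<exists>m. g ^^ Suc m \<in> H"
proof -
  interpret G: group thompsonF by (rule group_F)
  define c where "c = (\<lambda>i::nat. H #>\<^bsub>thompsonF\<^esub> (g [^]\<^bsub>thompsonF\<^esub> i))"
  have "range c \<subseteq> rcosets\<^bsub>thompsonF\<^esub> H"
    using G.rcosetsI subgroup.subset[OF H] G.nat_pow_closed[OF g] unfolding c_def by auto
  then have "finite (range c)" using fin finite_subset by blast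
  then have "\<not> inj c" using infinite_UNIV_nat finite_imageD by blast
  then obtain i j where ij: "c i = c j" "i \<noteq> j" unfolding inj_def by blast
  then obtain i j where ij: "c i = c j" "i < j" by (metis linorder_neq_iff)
  have gj: "g [^]\<^bsub>thompsonF\<^esub> j \<in> carrier thompsonF" using G.nat_pow_closed[OF g] .
  have gi: "g [^]\<^bsub>thompsonF\<^esub> i \<in> carrier thompsonF" using G.nat_pow_closed[OF g] .
  have gji: "g [^]\<^bsub>thompsonF\<^esub> (j - i) \<in> carrier thompsonF" using G.nat_pow_closed[OF g] .
  have "g [^]\<^bsub>thompsonF\<^esub> j \<in> c j" unfolding c_def by (rule G.rcos_self[OF gj H])
  then have "g [^]\<^bsub>thompsonF\<^esub> j \<in> H #>\<^bsub>thompsonF\<^esub> (g [^]\<^bsub>thompsonF\<^esub> i)"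
    using ij unfolding c_def by simp
  then have inH: "g [^]\<^bsub>thompsonF\<^esub> j \<otimes>\<^bsub>thompsonF\<^esub> inv\<^bsub>thompsonF\<^esub> (g [^]\<^bsub>thompsonF\<^esub> i) \<in> H"
    by (rule subgroup.rcos_module_imp[OF H group_F gi])
  have "g [^]\<^bsub>thompsonF\<^esub> j = g [^]\<^bsub>thompsonF\<^esub> (j - i) \<otimes>\<^bsub>thompsonF\<^esub> g [^]\<^bsub>thompsonF\<^esub> i"
    using G.nat_pow_mult[OF g, of "j - i" i] ij by simp
  then have "g [^]\<^bsub>thompsonF\<^esub> j \<otimes>\<^bsub>thompsonF\<^esub> inv\<^bsub>thompsonF\<^esub> (g [^]\<^bsub>thompsonF\<^esub> i)
      = g [^]\<^bsub>thompsonF\<^esub> (j - i)"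
    using gi gji by (simp add: G.m_assoc G.r_inv)
  then have "g [^]\<^bsub>thompsonF\<^esub> (j - i) \<in> H" using inH by simp
  moreover obtain m where "j - i = Suc m" using ij by (metis Suc_diff_Suc zero_less_diff diff_Suc_1 not0_implies_Suc)
  ultimately show ?thesis using pow_F by metis
qed

lemma moved_in: assumes "f \<in> thompsonF_carrier" "f z \<noteq> z" shows "z \<in> {0<..<1}"
proof -
  have "z \<in> {0..1}" using carrier_basic(4)[OF assms(1)] assms(2) by blast
  moreover have "z \<noteq> 0" "z \<noteq> 1" using carrier_01[OF assms(1)] assms(2) by auto
  ultimately show ?thesis by auto
qed

lemma open_moved: assumes "f \<in> thompsonF_carrier" shows "open ({0<..<1} \<inter> (\<lambda>s. f s - s) -` (-{0}))"
proof -
  have "continuous_on {0<..<1} f"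
    using carrier_basic(2)[OF assms] by (rule continuous_on_subset) auto
  then have "continuous_on {0<..<1} (\<lambda>s. f s - s)" by (intro continuous_intros)
  then have "open ((\<lambda>s. f s - s) -` (-{0}) \<inter> {0<..<1})"
    using continuous_on_open_vimage[of "{0<..<1}" "\<lambda>s. f s - s"] by auto
  then show ?thesis by (simp add: Int_commute)
qed

lemma g0_in: "bump 0 (1/4) \<in> thompsonF_carrier"
  using bump_in[of 0 "1/4"] dyadic_int[of 0] dyadic_pow[of 2] by simp

lemma g0_pow: "\<forall>s. s \<in> {0<..<1} \<longrightarrow> s < (bump 0 (1/4) ^^ Suc m) s"
proof -
  have "\<forall>s. s \<in> {0<..<0+4*(1/4)} \<longrightarrow> s < bump 0 (1/4) s \<and> bump 0 (1/4) s < 0+4*(1/4)"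
    using bump_gt[of "1/4" _ 0] by simp
  moreover have "\<forall>s. s \<notin> {0<..<0+4*(1/4)} \<longrightarrow> bump 0 (1/4) s = s"
    using bump_out[of "1/4" _ 0] by simp
  ultimately have "\<forall>s. s \<in> {0<..<0+4*(1/4)} \<longrightarrow> s < (bump 0 (1/4) ^^ Suc m) s \<and> (bump 0 (1/4) ^^ Suc m) s < 0+4*(1/4)"
    by (rule funpow_bump(1))
  then show ?thesis by simp
qed

lemma F_infinite: "infinite (carrier thompsonF)"
proof
  assume fin: "finite (carrier thompsonF)"
  interpret T: group thompsonF by (rule group_F)
  have sub: "subgroup {\<one>\<^bsub>thompsonF\<^esub>} thompsonF" by (rule T.triv_subgroup)
  have "rcosets\<^bsub>thompsonF\<^esub> {\<one>\<^bsub>thompsonF\<^esub>} \<subseteq> Pow (carrier thompsonF)"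
    by (rule T.rcosets_subset_PowG[OF sub])
  then have "finite (rcosets\<^bsub>thompsonF\<^esub> {\<one>\<^bsub>thompsonF\<^esub>})" using fin by (meson finite_Pow_iff finite_subset)
  then obtain m where "bump 0 (1/4) ^^ Suc m \<in> {\<one>\<^bsub>thompsonF\<^esub>}"
    using pow_in_sub[OF sub] g0_in T_carrier by blast
  then have "bump 0 (1/4) ^^ Suc m = id" by (simp add: T_one)
  moreover have "(1/2::real) \<in> {0<..<1}" by simp
  then have "(1/2::real) < (bump 0 (1/4) ^^ Suc m) (1/2)" using g0_pow[of m] by blast
  ultimately show False by simp
qed




lemma main_disj:
  fixes G1 :: "'a monoid" and G2 :: "'b monoid" and \<phi> :: "'a \<times> 'b \<Rightarrow> real \<Rightarrow> real"
  assumes grp1: "group G1" and grp2: "group G2"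
    and hom: "\<phi> \<in> hom (G1 \<times>\<times> G2) thompsonF"
    and fin: "finite (rcosets\<^bsub>thompsonF\<^esub> (\<phi> ` carrier (G1 \<times>\<times> G2)))"
  shows "finite (\<phi> ` (carrier G1 \<times> {\<one>\<^bsub>G2\<^esub>})) \<or> finite (\<phi> ` ({\<one>\<^bsub>G1\<^esub>} \<times> carrier G2))"
proof -
  interpret G1: group G1 by fact
  interpret G2: group G2 by fact
  interpret T: group thompsonF by (rule group_F)
  have grpK: "group (G1 \<times>\<times> G2)" by (rule DirProd_group[OF grp1 grp2])
  have gh: "group_hom (G1 \<times>\<times> G2) thompsonF \<phi>"
    unfolding group_hom_def group_hom_axioms_def using grpK group_F hom by simp
  let ?H = "\<phi> ` carrier (G1 \<times>\<times> G2)"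
  have subH: "subgroup ?H thompsonF" by (rule group_hom.img_is_subgroup[OF gh])
  have P1: "\<And>x y. x \<in> carrier G1 \<Longrightarrow> y \<in> carrier G2 \<Longrightarrow> \<phi> (x,y) \<in> thompsonF_carrier"
    using hom_in_carrier[OF hom] T_carrier by auto
  have P2: "\<And>x y x' y'. x\<in>carrier G1 \<Longrightarrow> y\<in>carrier G2 \<Longrightarrow> x'\<in>carrier G1 \<Longrightarrow> y'\<in>carrier G2 \<Longrightarrow>
      \<phi> (x,y) \<circ> \<phi> (x',y') = \<phi> (x \<otimes>\<^bsub>G1\<^esub> x', y \<otimes>\<^bsub>G2\<^esub> y')"
  proof -
    fix x y x' y' assume "x\<in>carrier G1" "y\<in>carrier G2" "x'\<in>carrier G1" "y'\<in>carrier G2"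
    then have "\<phi> ((x,y) \<otimes>\<^bsub>G1\<times>\<times>G2\<^esub> (x',y')) = \<phi> (x,y) \<otimes>\<^bsub>thompsonF\<^esub> \<phi> (x',y')"
      using hom_mult[OF hom, of "(x,y)" "(x',y')"] by simp
    then show "\<phi> (x,y) \<circ> \<phi> (x',y') = \<phi> (x \<otimes>\<^bsub>G1\<^esub> x', y \<otimes>\<^bsub>G2\<^esub> y')" by (simp add: T_mult)
  qed
  have P3: "\<phi> (\<one>\<^bsub>G1\<^esub>, \<one>\<^bsub>G2\<^esub>) = id" using group_hom.hom_one[OF gh] by (simp add: T_one)
  have comm: "\<And>w y. w\<in>carrier G1 \<Longrightarrow> y\<in>carrier G2 \<Longrightarrow>
      \<phi> (w,\<one>\<^bsub>G2\<^esub>) \<circ> \<phi> (\<one>\<^bsub>G1\<^esub>,y) = \<phi> (\<one>\<^bsub>G1\<^esub>,y) \<circ> \<phi> (w,\<one>\<^bsub>G2\<^esub>)"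
    using P2 by simp
  have powH: "\<And>g. g \<in> thompsonF_carrier \<Longrightarrow> \<exists>m x y. x\<in>carrier G1 \<and> y\<in>carrier G2 \<and> g^^Suc m = \<phi> (x,y)"
  proof -
    fix g assume "g \<in> thompsonF_carrier"
    then obtain m where "g ^^ Suc m \<in> ?H" using pow_in_sub[OF subH fin] T_carrier by blast
    then show "\<exists>m x y. x\<in>carrier G1 \<and> y\<in>carrier G2 \<and> g^^Suc m = \<phi> (x,y)" by auto
  qed
  have mono_iff: "\<And>f. f \<in> thompsonF_carrier \<Longrightarrow> \<forall>x y. f x < f y \<longleftrightarrow> x < y"
    using carrier_less_iff by blast
  have D: "\<forall>x1\<in>carrier G1. \<forall>y2\<in>carrier G2. \<forall>z. \<phi> (x1,\<one>\<^bsub>G2\<^esub>) z \<noteq> z \<longrightarrow> \<phi> (\<one>\<^bsub>G1\<^esub>,y2) z = z"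
  proof (intro ballI allI impI)
    fix x1 y2 z assume x1: "x1 \<in> carrier G1" and y2: "y2 \<in> carrier G2"
      and az: "\<phi> (x1,\<one>\<^bsub>G2\<^esub>) z \<noteq> z"
    show "\<phi> (\<one>\<^bsub>G1\<^esub>,y2) z = z"
    proof (rule ccontr)
      assume bz: "\<phi> (\<one>\<^bsub>G1\<^esub>,y2) z \<noteq> z"
      define a where "a = \<phi> (x1, \<one>\<^bsub>G2\<^esub>)"
      define b where "b = \<phi> (\<one>\<^bsub>G1\<^esub>, y2)"
      have aC: "a \<in> thompsonF_carrier" unfolding a_def using P1 x1 by simp
      have bC: "b \<in> thompsonF_carrier" unfolding b_def using P1 y2 by simp
      define W where "W = ({0<..<1} \<inter> (\<lambda>s. a s - s) -` (-{0})) \<inter> ({0<..<1} \<inter> (\<lambda>s. b s - s) -` (-{0}))"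
      have oW: "open W" unfolding W_def using open_moved[OF aC] open_moved[OF bC] by (rule open_Int)
      have zW: "z \<in> W" unfolding W_def using moved_in[OF aC] az bz unfolding a_def b_def by auto
      obtain e where e: "e > 0" "\<forall>y. dist y z < e \<longrightarrow> y \<in> W" using oW zW unfolding open_dist by blast
      obtain p where p: "dyadic p" "z < p" "p < z + e" using dyadic_between[of z "z + e"] e by auto
      have "dist p z < e" using p by (simp add: dist_real_def)
      then have pW: "p \<in> W" using e by blast
      then have p01: "0 < p" "p < 1" and ap: "a p \<noteq> p" and bp: "b p \<noteq> p" unfolding W_def by auto
      define d where "d = \<bar>a p - p\<bar>"
      have d0: "d > 0" using ap unfolding d_def by simp
      have "continuous (at p) a"
        using continuous_on_interior[OF carrier_basic(2)[OF aC]] p01 by simp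
      then obtain \<delta> where dl: "\<delta> > 0" "\<forall>x'. dist x' p < \<delta> \<longrightarrow> dist (a x') (a p) < d/2"
        unfolding continuous_at_eps_delta using d0 by (metis half_gt_zero)
      have "min (min \<delta> (d/2)) (1 - p) / 4 > 0" using dl d0 p01 by simp
      then obtain n where n: "1/2^n < min (min \<delta> (d/2)) (1 - p) / 4" using small_pow by blast
      define L :: real where "L = 1/2^n"
      define q where "q = p + 4*L"
      have L0: "L > 0" unfolding L_def by simp
      have dL: "dyadic L" unfolding L_def by (rule dyadic_pow)
      have Ld: "4*L < \<delta>" "4*L < d/2" "p + 4*L < 1" using n unfolding L_def by auto
      have disj: "\<forall>s. s \<in> {p<..<q} \<longrightarrow> a s \<notin> {p<..<q}"
      proof (intro allI impI)
        fix s assume s: "s \<in> {p<..<q}"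
        show "a s \<notin> {p<..<q}"
        proof
          assume as: "a s \<in> {p<..<q}"
          have "dist s p < \<delta>" using s Ld unfolding q_def by (simp add: dist_real_def)
          then have "dist (a s) (a p) < d/2" using dl by blast
          moreover have "\<bar>a s - p\<bar> < d/2" using as Ld unfolding q_def by auto
          ultimately have "\<bar>a s - a p\<bar> < d/2" "\<bar>a s - p\<bar> < d/2" by (simp_all add: dist_real_def)
          then have "\<bar>a p - p\<bar> < d" by linarith
          then show False unfolding d_def by simp
        qed
      qed
      define g where "g = bump p L"
      have gC: "g \<in> thompsonF_carrier" unfolding g_def using bump_in[OF p(1) dL _ L0] p01 Ld by simp
      obtain m x1' x2' where x1': "x1' \<in> carrier G1" and x2': "x2' \<in> carrier G2"
        and hm: "g^^Suc m = \<phi> (x1',x2')" using powH[OF gC] by blast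
      define h where "h = \<phi> (x1',x2')"
      have gin: "\<forall>s. s \<in> {p<..<q} \<longrightarrow> s < g s \<and> g s < q"
        unfolding g_def q_def using bump_gt[OF L0] by blast
      have gout: "\<forall>s. s \<notin> {p<..<q} \<longrightarrow> g s = s"
        unfolding g_def q_def using bump_out[OF L0] by blast
      have hin: "\<forall>s. s \<in> {p<..<q} \<longrightarrow> s < h s \<and> h s < q"
        unfolding h_def hm[symmetric] by (rule funpow_bump(1)[OF gin gout])
      have hout: "\<forall>s. s \<notin> {p<..<q} \<longrightarrow> h s = s"
        unfolding h_def hm[symmetric] by (rule funpow_bump(2)[OF gin gout])
      define hi where "hi = \<phi> (inv\<^bsub>G1\<^esub> x1', inv\<^bsub>G2\<^esub> x2')"
      have hhi: "h \<circ> hi = id" unfolding h_def hi_def using P2 P3 x1' x2' by simp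
      have hih: "hi \<circ> h = id" unfolding h_def hi_def using P2 P3 x1' x2' by simp
      define ai where "ai = \<phi> (inv\<^bsub>G1\<^esub> x1, \<one>\<^bsub>G2\<^esub>)"
      have aai: "a \<circ> ai = id" unfolding a_def ai_def using P2 P3 x1 by simp
      define w where "w = x1 \<otimes>\<^bsub>G1\<^esub> x1' \<otimes>\<^bsub>G1\<^esub> inv\<^bsub>G1\<^esub> x1 \<otimes>\<^bsub>G1\<^esub> inv\<^bsub>G1\<^esub> x1'"
      have wC: "w \<in> carrier G1" unfolding w_def using x1 x1' by simp
      have c_eq: "a \<circ> h \<circ> ai \<circ> hi = \<phi> (w, \<one>\<^bsub>G2\<^esub>)"
      proof -
        have e1: "a \<circ> h = \<phi> (x1 \<otimes>\<^bsub>G1\<^esub> x1', x2')" unfolding a_def h_def using P2 x1 x1' x2' by simp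
        have e2: "a \<circ> h \<circ> ai = \<phi> (x1 \<otimes>\<^bsub>G1\<^esub> x1' \<otimes>\<^bsub>G1\<^esub> inv\<^bsub>G1\<^esub> x1, x2')"
          unfolding e1 ai_def using P2 x1 x1' x2' by simp
        have "a \<circ> h \<circ> ai \<circ> hi = \<phi> (w, x2' \<otimes>\<^bsub>G2\<^esub> inv\<^bsub>G2\<^esub> x2')"
          unfolding e2 hi_def w_def using P2 x1 x1' x2' by simp
        then show ?thesis using x2' by simp
      qed
      have a_mono: "\<forall>x y. x \<le> y \<longrightarrow> a x \<le> a y" using carrier_le_iff[OF aC] by blast
      have cc: "\<forall>s. (a \<circ> h \<circ> ai \<circ> hi) s < s \<longleftrightarrow> s \<in> {p<..<q}"
      proof
        fix s show "(a \<circ> h \<circ> ai \<circ> hi) s < s \<longleftrightarrow> s \<in> {p<..<q}"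
        proof (rule conj_lemma[OF a_mono _ hin hout _ _ disj])
          show "\<forall>x. a (ai x) = x" using fun_cong[OF aai] by simp
          show "\<forall>x. h (hi x) = x" using fun_cong[OF hhi] by simp
          show "\<forall>x. hi (h x) = x" using fun_cong[OF hih] by simp
        qed
      qed
      define bi where "bi = \<phi> (\<one>\<^bsub>G1\<^esub>, inv\<^bsub>G2\<^esub> y2)"
      have biC: "bi \<in> thompsonF_carrier" unfolding bi_def using P1 y2 by simp
      have bc: "b \<circ> (a \<circ> h \<circ> ai \<circ> hi) = (a \<circ> h \<circ> ai \<circ> hi) \<circ> b"
        unfolding c_eq b_def using comm[OF wC y2] by simp
      have bic: "bi \<circ> (a \<circ> h \<circ> ai \<circ> hi) = (a \<circ> h \<circ> ai \<circ> hi) \<circ> bi"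
        unfolding c_eq bi_def using comm[OF wC] y2 by simp
      have bbi: "b \<circ> bi = id" unfolding b_def bi_def using P2 P3 y2 by simp
      have bib: "bi \<circ> b = id" unfolding b_def bi_def using P2 P3 y2 by simp
      have pq: "p < q" unfolding q_def using L0 by simp
      have "b p = p"
      proof (rule fix_end[OF pq mono_iff[OF bC] mono_iff[OF biC]])
        show "\<forall>x. b (bi x) = x" using fun_cong[OF bbi] by simp
        show "\<forall>x. bi (b x) = x" using fun_cong[OF bib] by simp
        show "\<forall>s. s \<in> {p<..<q} \<longrightarrow> b s \<in> {p<..<q}" by (rule comm_pres[OF mono_iff[OF bC] bc cc])
        show "\<forall>s. s \<in> {p<..<q} \<longrightarrow> bi s \<in> {p<..<q}" by (rule comm_pres[OF mono_iff[OF biC] bic cc])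
      qed
      then show False using bp by simp
    qed
  qed
  show ?thesis
  proof (rule ccontr)
    assume "\<not> ?thesis"
    then have infA: "infinite (\<phi> ` (carrier G1 \<times> {\<one>\<^bsub>G2\<^esub>}))"
      and infB: "infinite (\<phi> ` ({\<one>\<^bsub>G1\<^esub>} \<times> carrier G2))" by auto
    have "\<not> \<phi> ` (carrier G1 \<times> {\<one>\<^bsub>G2\<^esub>}) \<subseteq> {id}" using infA finite_subset by blast
    then obtain x1 where x1: "x1 \<in> carrier G1" "\<phi> (x1, \<one>\<^bsub>G2\<^esub>) \<noteq> id" by auto
    have "\<not> \<phi> ` ({\<one>\<^bsub>G1\<^esub>} \<times> carrier G2) \<subseteq> {id}" using infB finite_subset by blast
    then obtain y2 where y2: "y2 \<in> carrier G2" "\<phi> (\<one>\<^bsub>G1\<^esub>, y2) \<noteq> id" by auto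
    obtain z where z: "\<phi> (x1, \<one>\<^bsub>G2\<^esub>) z \<noteq> z" using x1(2) by (metis eq_id_iff)
    obtain v where v: "\<phi> (\<one>\<^bsub>G1\<^esub>, y2) v \<noteq> v" using y2(2) by (metis eq_id_iff)
    have z01: "z \<in> {0<..<1}" using moved_in[OF P1[OF x1(1)] z] by simp
    have v01: "v \<in> {0<..<1}" using moved_in[OF P1[OF _ y2(1)] v] by simp
    obtain m u1 u2 where u1: "u1 \<in> carrier G1" and u2: "u2 \<in> carrier G2"
      and hm: "bump 0 (1/4) ^^ Suc m = \<phi> (u1,u2)" using powH[OF g0_in] by blast
    define a' where "a' = \<phi> (u1, \<one>\<^bsub>G2\<^esub>)"
    define b' where "b' = \<phi> (\<one>\<^bsub>G1\<^esub>, u2)"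
    have a'C: "a' \<in> thompsonF_carrier" unfolding a'_def using P1 u1 by simp
    have b'C: "b' \<in> thompsonF_carrier" unfolding b'_def using P1 u2 by simp
    have split: "\<phi> (u1,u2) = a' \<circ> b'" unfolding a'_def b'_def using P2 u1 u2 by simp
    define U where "U = {0<..<1} \<inter> (\<lambda>s. a' s - s) -` (-{0})"
    define V where "V = {0<..<1} \<inter> (\<lambda>s. b' s - s) -` (-{0})"
    have oU: "open U" unfolding U_def by (rule open_moved[OF a'C])
    have oV: "open V" unfolding V_def by (rule open_moved[OF b'C])
    have cover: "{0<..<1} \<subseteq> U \<union> V"
    proof
      fix s :: real assume s: "s \<in> {0<..<1}"
      have "s < (a' \<circ> b') s" using g0_pow[of m] s hm split by metis
      then have "a' s \<noteq> s \<or> b' s \<noteq> s" by auto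
      then show "s \<in> U \<union> V" using s unfolding U_def V_def by auto
    qed
    have dis: "U \<inter> V \<inter> {0<..<1} = {}"
    proof (rule ccontr)
      assume "U \<inter> V \<inter> {0<..<1} \<noteq> {}"
      then obtain s where "s \<in> U" "s \<in> V" by blast
      then have "a' s \<noteq> s" "b' s \<noteq> s" unfolding U_def V_def by auto
      then show False using D u1 u2 unfolding a'_def b'_def by blast
    qed
    have "U \<inter> {0<..<1} = {} \<or> V \<inter> {0<..<1} = {}"
      by (rule connectedD[OF connected_Ioo oU oV dis cover])
    then show False
    proof
      assume "U \<inter> {0<..<1} = {}"
      then have "z \<in> V" using cover z01 by blast
      then have "b' z \<noteq> z" unfolding V_def by auto
      then show False using D x1(1) u2 z unfolding b'_def by blast
    next
      assume "V \<inter> {0<..<1} = {}"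
      then have "v \<in> U" using cover v01 by blast
      then have "a' v \<noteq> v" unfolding U_def by auto
      then show False using D u1 y2(1) v unfolding a'_def by blast
    qed
  qed
qed

theorem proposition7p1:
  fixes G1 :: "'a monoid" and G2 :: "'b monoid" and \<phi> :: "'a \<times> 'b \<Rightarrow> real \<Rightarrow> real"
  assumes "group G1" and "group G2"
    and "\<phi> \<in> hom (G1 \<times>\<times> G2) thompsonF"
    and "finite (rcosets\<^bsub>thompsonF\<^esub> (\<phi> ` carrier (G1 \<times>\<times> G2)))"
  shows "group thompsonF \<and> infinite (carrier thompsonF) \<and>
    (finite (\<phi> ` (carrier G1 \<times> {\<one>\<^bsub>G2\<^esub>})) \<or> finite (\<phi> ` ({\<one>\<^bsub>G1\<^esub>} \<times> carrier G2)))"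
  using group_F F_infinite main_disj[OF assms] by blast


end
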